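(* Let $M\in\mathbb{R}_+^{m\times n}$ be a matrix with nonnegative entries and let $k\ge 1$ be an integer. Consider the problem $$\min_{U\in\mathbb{R}_+^{m\times k},\,V\in\mathbb{R}_+^{n\times k}}\ \left\|M-UV^\top\right\|_F .$$ If an optimal solution to this problem exists, then there exists at least one global optimal solution $(U,V)$ satisfying $$U_{i,l}\le \sqrt{2\|M\|_F}\quad\text{and}\quad V_{j,l}\le\sqrt{2\|M\|_F}\qquad\text{for all } i\in\{1,\dots,m\},\ j\in\{1,\dots,n\},\ l\in\{1,\dots,k\}.$$
   Context: $\mathbb{R}_+^{p\times q}$ denotes the set of $p\times q$ real matrices with nonnegative entries; $\|X\|_F=(\sum_{ij}X_{ij}^2)^{1/2}$ is the Frobenius norm; $U_{i,l}$ denotes the $(i,l)$ entry of $U$. *)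

theory Defs
  imports "HOL-Analysis.Analysis"
begin

definition frob :: "real^'n^'m \<Rightarrow> real" where
  "frob X = sqrt (\<Sum>i\<in>UNIV. \<Sum>j\<in>UNIV. (X $ i $ j)^2)"

definition nonneg_mat :: "real^'n^'m \<Rightarrow> bool" where
  "nonneg_mat X \<longleftrightarrow> (\<forall>i j. X $ i $ j \<ge> 0)"

definition nmf_obj :: "real^'n^'m \<Rightarrow> real^'k^'m \<Rightarrow> real^'k^'n \<Rightarrow> real" where
  "nmf_obj M U V = frob (M - U ** transpose V)"

definition nmf_optimal :: "real^'n^'m \<Rightarrow> real^'k^'m \<Rightarrow> real^'k^'n \<Rightarrow> bool" where
  "nmf_optimal M U V \<longleftrightarrow> nonneg_mat U \<and> nonneg_mat V \<and>
     (\<forall>U' V'. nonneg_mat (U'::real^'k^'m) \<and> nonneg_mat (V'::real^'k^'n) \<longrightarrow>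
        nmf_obj M U V \<le> nmf_obj M U' V')"

end

theory Submission
  imports Defs
begin

lemma frob_norm: "frob (X::real^'n^'m) = norm X"
proof -
  have "\<And>i. (norm (X$i))^2 = (\<Sum>j\<in>UNIV. (X$i$j)^2)"
    by (simp add: norm_vec_def L2_set_def sum_nonneg)
  then show ?thesis
    by (simp add: frob_def norm_vec_def L2_set_def)
qed

lemma entry_le_frob: "X $ i $ j \<le> frob (X::real^'n^'m)"
proof -
  have "X$i$j \<le> norm (X$i)"
    by (metis abs_ge_self component_le_norm_cart order_trans real_norm_def)
  also have "\<dots> \<le> norm X" by (rule Finite_Cartesian_Product.norm_nth_le)
  finally show ?thesis by (simp add: frob_norm)
qed

lemma prod_entry: "(U ** transpose V) $ i $ j = (\<Sum>l\<in>UNIV. U$i$l * V$j$l)"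
  for U :: "real^'k^'m" and V :: "real^'k^'n"
  by (simp add: matrix_matrix_mult_def transpose_def)

theorem lemma1:
  fixes M :: "real^'n^'m"
  assumes "nonneg_mat M"
    and "\<exists>U0 :: real^'k^'m. \<exists>V0 :: real^'k^'n. nmf_optimal M U0 V0"
  shows "\<exists>U :: real^'k^'m. \<exists>V :: real^'k^'n. nmf_optimal M U V \<and>
           (\<forall>i l. U $ i $ l \<le> sqrt (2 * frob M)) \<and>
           (\<forall>j l. V $ j $ l \<le> sqrt (2 * frob M))"
proof -
  obtain U0 :: "real^'k^'m" and V0 :: "real^'k^'n" where opt: "nmf_optimal M U0 V0"
    using assms(2) by blast
  have U0n: "\<And>i l. U0$i$l \<ge> 0" and V0n: "\<And>j l. V0$j$l \<ge> 0"
    using opt by (auto simp: nmf_optimal_def nonneg_mat_def)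
  define P where "P = U0 ** transpose V0"
  have z: "nonneg_mat (0::real^'k^'m)" by (simp add: nonneg_mat_def)
  have "frob (M - P) \<le> frob (M - (0::real^'k^'m) ** transpose V0)"
    using opt unfolding nmf_optimal_def nmf_obj_def P_def
    apply (elim conjE)
    apply (erule allE[where x="0::real^'k^'m"], erule allE[where x=V0])
    using z by simp
  hence "frob (M - P) \<le> frob M" by simp
  hence Pb: "frob P \<le> 2 * frob M"
    using norm_triangle_ineq4[of M "M - P"] by (simp add: frob_norm)
  define p where "p l = Max (range (\<lambda>i. U0$i$l))" for l
  define q where "q l = Max (range (\<lambda>j. V0$j$l))" for l
  have pge: "U0$i$l \<le> p l" for i l unfolding p_def by (rule Max_ge) auto
  have qge: "V0$j$l \<le> q l" for j l unfolding q_def by (rule Max_ge) auto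
  have pin: "\<exists>i. U0$i$l = p l" for l
    proof -
    have "p l \<in> range (\<lambda>i. U0$i$l)" unfolding p_def by (rule Max_in) auto
    then show ?thesis by (simp add: image_iff eq_commute)
  qed
  have qin: "\<exists>j. V0$j$l = q l" for l
    proof -
    have "q l \<in> range (\<lambda>j. V0$j$l)" unfolding q_def by (rule Max_in) auto
    then show ?thesis by (simp add: image_iff eq_commute)
  qed
  have p0: "p l \<ge> 0" for l using pge[of undefined l] U0n[of undefined l] by linarith
  have q0: "q l \<ge> 0" for l using qge[of undefined l] V0n[of undefined l] by linarith
  have pq: "p l * q l \<le> 2 * frob M" for l
  proof -
    obtain i j where ij: "U0$i$l = p l" "V0$j$l = q l" using pin qin by metis
    have "U0$i$l * V0$j$l \<le> (\<Sum>l'\<in>UNIV. U0$i$l' * V0$j$l')"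
      by (rule member_le_sum) (auto intro: mult_nonneg_nonneg U0n V0n)
    also have "\<dots> = P$i$j" by (simp add: P_def prod_entry)
    also have "\<dots> \<le> frob P" by (rule entry_le_frob)
    finally show ?thesis using ij Pb by simp
  qed
  define s where "s l = (if p l * q l = 0 then 0 else sqrt (q l / p l))" for l
  define r where "r l = (if p l * q l = 0 then 0 else sqrt (p l / q l))" for l
  define U :: "real^'k^'m" where "U = (\<chi> i l. U0$i$l * s l)"
  define V :: "real^'k^'n" where "V = (\<chi> j l. V0$j$l * r l)"
  have s0: "s l \<ge> 0" and r0: "r l \<ge> 0" for l
    using p0 q0 by (auto simp: s_def r_def)
  have term_eq: "U0$i$l * s l * (V0$j$l * r l) = U0$i$l * V0$j$l" for i j l
  proof (cases "p l * q l = 0")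
    case True
    hence "U0$i$l = 0 \<or> V0$j$l = 0"
      using pge[of i l] qge[of j l] U0n[of i l] V0n[of j l] by auto
    then show ?thesis by auto
  next
    case False
    hence "p l > 0" "q l > 0" using p0 q0 by (auto simp: less_le)
    hence "s l * r l = 1"
      by (simp add: s_def r_def real_sqrt_mult[symmetric])
    have "U0$i$l * s l * (V0$j$l * r l) = U0$i$l * V0$j$l * (s l * r l)" by (simp add: ac_simps)
    then show ?thesis using \<open>s l * r l = 1\<close> by simp
  qed
  have same: "U ** transpose V = U0 ** transpose V0"
    by (simp add: vec_eq_iff prod_entry U_def V_def term_eq)
  have nn: "nonneg_mat U" "nonneg_mat V"
    using U0n V0n s0 r0 by (auto simp: nonneg_mat_def U_def V_def)
  have optU: "nmf_optimal M U V"
    using opt nn unfolding nmf_optimal_def nmf_obj_def same by simp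
  have fM: "frob M \<ge> 0" by (simp add: frob_norm)
  have bnd: "sqrt (p l * q l) \<le> sqrt (2 * frob M)" for l
    using pq by simp
  have Ub: "U$i$l \<le> sqrt (2 * frob M)" for i l
  proof (cases "p l * q l = 0")
    case True then show ?thesis using fM by (simp add: U_def s_def)
  next
    case False
    hence pp: "p l > 0" "q l > 0" using p0 q0 by (auto simp: less_le)
    have "U$i$l \<le> p l * s l" unfolding U_def using pge s0 by (simp add: mult_right_mono)
    also have "p l * s l = sqrt ((p l)^2) * sqrt (q l / p l)" using False p0[of l] by (simp add: s_def)
    also have "\<dots> = sqrt ((p l)^2 * (q l / p l))" by (rule real_sqrt_mult[symmetric])
    also have "\<dots> = sqrt (p l * q l)" using pp by (simp add: power2_eq_square)
    finally show ?thesis using bnd[of l] by linarith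
  qed
  have Vb: "V$j$l \<le> sqrt (2 * frob M)" for j l
  proof (cases "p l * q l = 0")
    case True then show ?thesis using fM by (simp add: V_def r_def)
  next
    case False
    hence pp: "p l > 0" "q l > 0" using p0 q0 by (auto simp: less_le)
    have "V$j$l \<le> q l * r l" unfolding V_def using qge r0 by (simp add: mult_right_mono)
    also have "q l * r l = sqrt ((q l)^2) * sqrt (p l / q l)" using False q0[of l] by (simp add: r_def)
    also have "\<dots> = sqrt ((q l)^2 * (p l / q l))" by (rule real_sqrt_mult[symmetric])
    also have "\<dots> = sqrt (p l * q l)" using pp by (simp add: power2_eq_square)
    finally show ?thesis using bnd[of l] by linarith
  qed
  show ?thesis using optU Ub Vb by blast
qed

end
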